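(* Let $T=(V,E,r)$ be a finite rooted tree embedded in $\mathbb R^n$ as described in the context, and let $i,j,k$ be three adjacent nodes with $i<j$ and $i<k$, $j\neq k$ (i.e. $j$ and $k$ are distinct children of $i$). Assume: (A2) for all $x,x'\in[x_i,x_j]$ and $y,y'\in[x_i,x_k]$, $\ell([x_i,x])+\ell([x_i,y])\le\ell([x_i,x'])+\ell([x_i,y'])\Rightarrow\|\vec t(x)-\vec t(y)\|\le\|\vec t(x')-\vec t(y')\|$; (A3) there exist a neighborhood $U_i$ of $x_i$ and $0<a<2$ such that for all $x\in U_i\cap([x_i,x_j]\cup[x_i,x_k])$, $\|\vec t(x)-\vec t(x_i)\|\ge\ell([x_i,x])^a$. Then $$\langle\mu_{[x_i,x_j]},\mu_{[x_i,x_k]}\rangle_{W^\ast}=o\Big(\|\mu_{[x_i,x_j]}\|^2_{W^\ast}+\|\mu_{[x_i,x_k]}\|^2_{W^\ast}\Big)$$ as $\sigma_x,\sigma_t\to0$ with $\sigma_x\asymp\sigma_t$, where $\sigma_x\asymp\sigma_t$ means there exist constants $k_1,k_2>0$ with $k_1\sigma_x\le\sigma_t\le k_2\sigma_x$.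
   Context: Rooted tree and embedding. $T=(V,E,r)$ is a finite rooted tree with root $r$; $i<j$ means $i$ is the parent of $j$. The tree is embedded in $\mathbb R^n$ via an injective map $i\mapsto x_i\in\mathbb R^n$ and a map sending each edge $(i,j)$ to a smooth curve segment $[x_i,x_j]$ joining $x_i$ and $x_j$ (not necessarily a line segment); embeddings of two edges intersect only if the edges share a node, and only at the image of that node. The embedding of the path from $r$ to any node is a smooth, regular curve of finite length, oriented from the root to the end node; $[x,y]$ denotes the sub-arc between two points on a common embedded root-to-node path. $\ell(\gamma)$ is arc length, $\vec t(x)\in\mathbb S^{n-1}$ the unit oriented tangent vector at $x$ of the curve under consideration. For $\sigma_x,\sigma_t>0$ and smooth oriented curves $X,Y$ of finite length, $$\langle\mu_X,\mu_Y\rangle_{W^\ast}=\iint_{X\times Y} e^{-\|x-y\|^2/\sigma_x^2}\,e^{-\|\vec t(x)-\vec t(y)\|^2/\sigma_t^2}\,d\ell(x)\,d\ell(y),\qquad \|\mu_X\|^2_{W^\ast}=\langle\mu_X,\mu_X\rangle_{W^\ast}$$ (the oriented-varifold inner product induced by the Gaussian tensor-product kernel with parameters $\sigma_x,\sigma_t$). *)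

theory Defs
  imports "HOL-Analysis.Analysis"
begin

text \<open>A finite rooted tree: finite node set V, root r, parent function par.
  "i < j" (i is the parent of j) is rendered as  j \<in> V - {r} \<and> par j = i.\<close>
definition rooted_tree :: "'v set \<Rightarrow> 'v \<Rightarrow> ('v \<Rightarrow> 'v) \<Rightarrow> bool" where
  "rooted_tree V r par \<longleftrightarrow> finite V \<and> r \<in> V \<and>
     (\<forall>v\<in>V - {r}. par v \<in> V) \<and> (\<forall>v\<in>V. \<exists>m. (par ^^ m) v = r)"

definition smooth_unit_speed_on :: "real \<Rightarrow> (real \<Rightarrow> 'a::euclidean_space) \<Rightarrow> bool" where
  "smooth_unit_speed_on L f \<longleftrightarrow>
     (\<exists>D :: nat \<Rightarrow> real \<Rightarrow> 'a. D 0 = f \<and>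
        (\<forall>m. \<forall>s\<in>{0..L}. (D m has_vector_derivative D (Suc m) s) (at s within {0..L})) \<and>
        (\<forall>s\<in>{0..L}. norm (D 1 s) = 1))"

definition tangent :: "(real \<Rightarrow> 'a::euclidean_space) \<Rightarrow> real \<Rightarrow> real \<Rightarrow> 'a" where
  "tangent f L s = vector_derivative f (at s within {0..L})"

text \<open>Embedding of the rooted tree: node positions xp, and for each node v an arc-length
  parametrised root-to-v path P v on [0, L v]; the edge (par v, v) is the sub-arc
  P v ` {L (par v) .. L v}.\<close>
definition edge_img :: "('v \<Rightarrow> real \<Rightarrow> 'a) \<Rightarrow> ('v \<Rightarrow> real) \<Rightarrow> ('v \<Rightarrow> 'v) \<Rightarrow> 'v \<Rightarrow> 'a set" where
  "edge_img P L par v = P v ` {L (par v) .. L v}"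

definition tree_embedding ::
  "'v set \<Rightarrow> 'v \<Rightarrow> ('v \<Rightarrow> 'v) \<Rightarrow> ('v \<Rightarrow> 'a::euclidean_space) \<Rightarrow> ('v \<Rightarrow> real \<Rightarrow> 'a) \<Rightarrow> ('v \<Rightarrow> real) \<Rightarrow> bool" where
  "tree_embedding V r par xp P L \<longleftrightarrow>
     inj_on xp V \<and> L r = 0 \<and>
     (\<forall>v\<in>V. smooth_unit_speed_on (L v) (P v) \<and> P v 0 = xp r \<and> P v (L v) = xp v) \<and>
     (\<forall>v\<in>V - {r}. L (par v) < L v \<and> (\<forall>s\<in>{0..L (par v)}. P v s = P (par v) s) \<and>
                   inj_on (P v) {L (par v) .. L v}) \<and>
     (\<forall>v\<in>V - {r}. \<forall>w\<in>V - {r}. v \<noteq> w \<longrightarrow>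
        edge_img P L par v \<inter> edge_img P L par w \<subseteq> xp ` ({par v, v} \<inter> {par w, w}))"

text \<open>Oriented varifold inner product (Gaussian kernels) of the arc-length parametrised
  curves f|[a,b] (tangent tf) and g|[c,d] (tangent tg).\<close>
definition varifold_ip ::
  "real \<Rightarrow> real \<Rightarrow> (real \<Rightarrow> 'a::euclidean_space) \<Rightarrow> (real \<Rightarrow> 'a) \<Rightarrow> real \<Rightarrow> real
     \<Rightarrow> (real \<Rightarrow> 'a) \<Rightarrow> (real \<Rightarrow> 'a) \<Rightarrow> real \<Rightarrow> real \<Rightarrow> real" where
  "varifold_ip \<sigma>x \<sigma>t f tf a b g tg c d =
     integral {a..b} (\<lambda>s. integral {c..d} (\<lambda>u.
        exp (- (norm (f s - g u))\<^sup>2 / \<sigma>x\<^sup>2) * exp (- (norm (tf s - tg u))\<^sup>2 / \<sigma>t\<^sup>2)))"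

end

theory Submission
  imports Defs "HOL-Analysis.Analysis" "HOL-Real_Asymp.Real_Asymp"
begin


lemma integral_nonneg_any:
  fixes f :: "real \<Rightarrow> real"
  assumes "\<And>x. x \<in> S \<Longrightarrow> 0 \<le> f x"
  shows "0 \<le> integral S f"
  using assms integral_nonneg not_integrable_integral by (metis order_refl)

lemma integral_le_any:
  fixes f g :: "real \<Rightarrow> real"
  assumes "g integrable_on S" "\<And>x. x \<in> S \<Longrightarrow> f x \<le> g x" "0 \<le> integral S g"
  shows "integral S f \<le> integral S g"
proof (cases "f integrable_on S")
  case True then show ?thesis using assms integral_le by metis
next
  case False then show ?thesis using assms not_integrable_integral by metis
qed

lemma vec_lip:
  fixes F :: "real \<Rightarrow> 'a::euclidean_space"
  assumes d: "\<And>s. s \<in> {a..b} \<Longrightarrow> (F has_vector_derivative F' s) (at s within {a..b})"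
    and B: "\<And>s. s \<in> {a..b} \<Longrightarrow> norm (F' s) \<le> B"
    and s: "s \<in> {a..b}" and u: "u \<in> {a..b}"
  shows "norm (F s - F u) \<le> B * \<bar>s - u\<bar>"
proof -
  have "norm (F s - F u) \<le> B * norm (s - u)"
  proof (rule differentiable_bound[where f'="\<lambda>x h. h *\<^sub>R F' x"])
    show "convex {a..b}" by simp
    show "(F has_derivative (\<lambda>h. h *\<^sub>R F' x)) (at x within {a..b})" if "x \<in> {a..b}" for x
      using d[OF that] unfolding has_vector_derivative_def .
    show "onorm (\<lambda>h. h *\<^sub>R F' x) \<le> B" if "x \<in> {a..b}" for x
    proof -
      have "onorm (\<lambda>h::real. h *\<^sub>R F' x) = onorm (\<lambda>h::real. h) * norm (F' x)"
        by (rule onorm_scaleR_left) (rule bounded_linear_ident)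
      also have "onorm (\<lambda>h::real. h) = 1" using onorm_id by simp
      finally show ?thesis using B[OF that] by simp
    qed
  qed (use s u in auto)
  then show ?thesis by simp
qed



lemma lip_cont:
  fixes F :: "real \<Rightarrow> 'a::euclidean_space"
  assumes "\<And>s u. s \<in> S \<Longrightarrow> u \<in> S \<Longrightarrow> norm (F s - F u) \<le> B * \<bar>s - u\<bar>" "0 \<le> B"
  shows "continuous_on S F"
proof (rule lipschitz_on_continuous_on)
  show "B-lipschitz_on S F" unfolding lipschitz_on_def using assms by (auto simp: dist_norm)
qed

lemma curve_props:
  fixes f :: "real \<Rightarrow> 'a::euclidean_space"
  assumes sm: "smooth_unit_speed_on L f" and L: "0 < L"
  shows "\<exists>M\<ge>0. (\<forall>s\<in>{0..L}. \<forall>u\<in>{0..L}. norm (f s - f u) \<le> 1 * \<bar>s - u\<bar>) \<and>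
     (\<forall>s\<in>{0..L}. \<forall>u\<in>{0..L}. norm (tangent f L s - tangent f L u) \<le> M * \<bar>s - u\<bar>)"
proof -
  obtain D :: "nat \<Rightarrow> real \<Rightarrow> 'a" where D0: "D 0 = f"
    and Dd: "\<And>m s. s \<in> {0..L} \<Longrightarrow> (D m has_vector_derivative D (Suc m) s) (at s within {0..L})"
    and D1: "\<And>s. s \<in> {0..L} \<Longrightarrow> norm (D 1 s) = 1"
    using sm unfolding smooth_unit_speed_on_def by blast
  have tan: "tangent f L s = D 1 s" if "s \<in> {0..L}" for s
  proof -
    have "(f has_vector_derivative D 1 s) (at s within cbox 0 L)"
      using Dd[OF that, of 0] D0 by simp
    then have "vector_derivative f (at s within cbox 0 L) = D 1 s"
      using vector_derivative_within_cbox[of 0 L s f "D 1 s"] L that by simp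
    then show ?thesis unfolding tangent_def by simp
  qed
  have c2: "continuous_on {0..L} (D 2)"
  proof -
    have "continuous (at s within {0..L}) (D 2)" if "s \<in> {0..L}" for s
      using Dd[OF that, of 2] by (rule has_vector_derivative_continuous)
    then show ?thesis using continuous_on_eq_continuous_within by blast
  qed
  have "compact (D 2 ` {0..L})" using c2 compact_continuous_image by blast
  then obtain M where M: "M > 0" "\<And>x. x \<in> D 2 ` {0..L} \<Longrightarrow> norm x \<le> M"
    using compact_imp_bounded bounded_pos by metis
  have l1: "norm (f s - f u) \<le> 1 * \<bar>s - u\<bar>" if "s \<in> {0..L}" "u \<in> {0..L}" for s u
    using vec_lip[of 0 L f "D 1" 1 s u] Dd[of _ 0] D0 D1 that by simp
  have l2: "norm (tangent f L s - tangent f L u) \<le> M * \<bar>s - u\<bar>" if "s \<in> {0..L}" "u \<in> {0..L}" for s u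
    using vec_lip[of 0 L "D 1" "D 2" M s u] Dd[of _ 1] M that tan by (simp add: numeral_2_eq_2)
  show ?thesis using l1 l2 M(1) by (intro exI[of _ M]) auto
qed



lemma ind_has_integral:
  fixes k :: real
  assumes "p \<le> q" "x \<le> p" "q \<le> y"
  shows "((\<lambda>t. if t \<in> {p..q} then k else 0) has_integral k * (q - p)) {x..y}"
proof -
  have "((\<lambda>t. k) has_integral k * (q - p)) (cbox p q)"
    using has_integral_const_real[of k p q] assms by (simp add: mult.commute)
  then have "((\<lambda>t. if t \<in> cbox p q then k else 0) has_integral k * (q - p)) (cbox x y)"
    by (rule has_integral_restrict_closed_subinterval) (use assms in auto)
  then show ?thesis by simp
qed

lemma box_integral:
  fixes K :: "real \<Rightarrow> real \<Rightarrow> real"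
  assumes ab: "a0 < b" and ac: "a0 < c" and tau: "0 < \<tau>" "\<tau> \<le> b - a0" "\<tau> \<le> c - a0" and E: "0 \<le> E"
   and K1: "\<And>s u. s\<in>{a0..b} \<Longrightarrow> u\<in>{a0..c} \<Longrightarrow> K s u \<le> 1"
   and KE: "\<And>s u. s\<in>{a0..b} \<Longrightarrow> u\<in>{a0..c} \<Longrightarrow> \<not>(s \<le> a0+\<tau> \<and> u \<le> a0+\<tau>) \<Longrightarrow> K s u \<le> E"
  shows "integral {a0..b} (\<lambda>s. integral {a0..c} (K s)) \<le> \<tau>*\<tau> + E*(c-a0)*(b-a0)"
proof -
  define ch where "ch s = (if s \<le> a0+\<tau> then 1 else 0::real)" for s
  have inner: "integral {a0..c} (K s) \<le> ch s * \<tau> + E*(c-a0)" if s: "s \<in> {a0..b}" for s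
  proof -
    have hi: "((\<lambda>u. (if u \<in> {a0..a0+\<tau>} then ch s else 0) + E) has_integral ch s * \<tau> + E*(c-a0)) {a0..c}"
    proof -
      have "((\<lambda>u. if u \<in> {a0..a0+\<tau>} then ch s else 0) has_integral ch s * (a0 + \<tau> - a0)) {a0..c}"
        by (rule ind_has_integral) (use tau in auto)
      moreover have "((\<lambda>u. E) has_integral E*(c-a0)) {a0..c}"
        using has_integral_const_real[of E a0 c] ac by (simp add: mult.commute)
      ultimately have "((\<lambda>u. (if u \<in> {a0..a0+\<tau>} then ch s else 0) + E) has_integral ch s * (a0 + \<tau> - a0) + E*(c-a0)) {a0..c}"
        by (rule has_integral_add)
      then show ?thesis by simp
    qed
    have "integral {a0..c} (K s) \<le> integral {a0..c} (\<lambda>u. (if u \<in> {a0..a0+\<tau>} then ch s else 0) + E)"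
    proof (rule integral_le_any)
      show "(\<lambda>u. (if u \<in> {a0..a0+\<tau>} then ch s else 0) + E) integrable_on {a0..c}" using hi by blast
      show "K s u \<le> (if u \<in> {a0..a0+\<tau>} then ch s else 0) + E" if "u \<in> {a0..c}" for u
        using K1[OF s that] KE[OF s that] E that s unfolding ch_def by (cases "s \<le> a0+\<tau>"; cases "u \<le> a0+\<tau>") auto
      show "0 \<le> integral {a0..c} (\<lambda>u. (if u \<in> {a0..a0+\<tau>} then ch s else 0) + E)"
        using hi integral_unique[OF hi] tau E ac by (simp add: ch_def)
    qed
    then show ?thesis using integral_unique[OF hi] by simp
  qed
  have ho: "((\<lambda>s. (if s \<in> {a0..a0+\<tau>} then \<tau> else 0) + E*(c-a0)) has_integral \<tau>*\<tau> + E*(c-a0)*(b-a0)) {a0..b}"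
  proof -
    have "((\<lambda>s. if s \<in> {a0..a0+\<tau>} then \<tau> else 0) has_integral \<tau> * (a0 + \<tau> - a0)) {a0..b}"
      by (rule ind_has_integral) (use tau in auto)
    moreover have "((\<lambda>u. E*(c-a0)) has_integral E*(c-a0)*(b-a0)) {a0..b}"
      using has_integral_const_real[of "E*(c-a0)" a0 b] ab by (simp add: mult.commute)
    ultimately have "((\<lambda>s. (if s \<in> {a0..a0+\<tau>} then \<tau> else 0) + E*(c-a0)) has_integral \<tau> * (a0 + \<tau> - a0) + E*(c-a0)*(b-a0)) {a0..b}"
      by (rule has_integral_add)
    then show ?thesis by simp
  qed
  have "integral {a0..b} (\<lambda>s. integral {a0..c} (K s)) \<le> integral {a0..b} (\<lambda>s. (if s \<in> {a0..a0+\<tau>} then \<tau> else 0) + E*(c-a0))"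
  proof (rule integral_le_any)
    show "(\<lambda>s. (if s \<in> {a0..a0+\<tau>} then \<tau> else 0) + E*(c-a0)) integrable_on {a0..b}" using ho by blast
    show "integral {a0..c} (K s) \<le> (if s \<in> {a0..a0+\<tau>} then \<tau> else 0) + E*(c-a0)" if "s \<in> {a0..b}" for s
      using inner[OF that] that by (auto simp: ch_def)
    show "0 \<le> integral {a0..b} (\<lambda>s. (if s \<in> {a0..a0+\<tau>} then \<tau> else 0) + E*(c-a0))"
      using integral_unique[OF ho] tau E ac ab by simp
  qed
  then show ?thesis using integral_unique[OF ho] by simp
qed

lemma self_lower:
  fixes K :: "real \<Rightarrow> real \<Rightarrow> real"
  assumes ab: "a0 < b" and h: "0 < h" "h \<le> b - a0"
    and cont: "continuous_on ({a0..b} \<times> {a0..b}) (\<lambda>(s,u). K s u)"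
    and pos: "\<And>s u. s\<in>{a0..b} \<Longrightarrow> u\<in>{a0..b} \<Longrightarrow> \<bar>s-u\<bar> \<le> h \<Longrightarrow> \<kappa> \<le> K s u"
    and nn: "\<And>s u. s\<in>{a0..b} \<Longrightarrow> u\<in>{a0..b} \<Longrightarrow> 0 \<le> K s u"
  shows "\<kappa> * h * (b - a0) \<le> integral {a0..b} (\<lambda>s. integral {a0..b} (K s))"
proof -
  have cint: "continuous_on {a0..b} (\<lambda>s. integral {a0..b} (K s))"
    using integral_continuous_on_param[of "{a0..b}" a0 b K] cont by simp
  have inner: "\<kappa> * h \<le> integral {a0..b} (K s)" if s: "s \<in> {a0..b}" for s
  proof -
    define p where "p = min s (b - h)"
    have p: "a0 \<le> p" "p + h \<le> b" "p \<le> s" "s \<le> p + h" using s h by (auto simp: p_def)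
    have hi: "((\<lambda>u. if u \<in> {p..p+h} then \<kappa> else 0) has_integral \<kappa> * (p + h - p)) {a0..b}"
      by (rule ind_has_integral) (use p h in auto)
    have cK: "continuous_on {a0..b} (K s)"
    proof -
      have "continuous_on {a0..b} (\<lambda>u. (\<lambda>(s,u). K s u) (s, u))"
        by (rule continuous_on_compose2[OF cont]) (use s in \<open>auto intro!: continuous_intros\<close>)
      then show ?thesis by simp
    qed
    have "integral {a0..b} (\<lambda>u. if u \<in> {p..p+h} then \<kappa> else 0) \<le> integral {a0..b} (K s)"
    proof (rule integral_le)
      show "(\<lambda>u. if u \<in> {p..p+h} then \<kappa> else 0) integrable_on {a0..b}" using hi by blast
      show "K s integrable_on {a0..b}" using cK integrable_continuous_interval by blast
      show "(if u \<in> {p..p+h} then \<kappa> else 0) \<le> K s u" if "u \<in> {a0..b}" for u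
      proof (cases "u \<in> {p..p+h}")
        case True then show ?thesis using pos[OF s that] p by auto
      next
        case False
        have "(if u \<in> {p..p+h} then \<kappa> else 0) = 0" using False by (rule if_not_P)
        then show ?thesis using nn[OF s that] by (simp only:)
      qed
    qed
    then show ?thesis using integral_unique[OF hi] by simp
  qed
  have "integral {a0..b} (\<lambda>s. \<kappa> * h) \<le> integral {a0..b} (\<lambda>s. integral {a0..b} (K s))"
    by (rule integral_le) (use cint integrable_continuous_interval inner in auto)
  then show ?thesis using ab by (simp add: mult.commute mult.left_commute)
qed



lemma cont_fst_snd:
  fixes F :: "real \<Rightarrow> 'a::euclidean_space"
  assumes "continuous_on {a..b} F"
  shows "continuous_on ({a..b} \<times> T) (\<lambda>p. F (fst p))" "continuous_on (T \<times> {a..b}) (\<lambda>p. F (snd p))"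
proof -
  show "continuous_on ({a..b} \<times> T) (\<lambda>p. F (fst p))"
    by (rule continuous_on_compose2[OF assms continuous_on_fst[OF continuous_on_id]]) auto
  show "continuous_on (T \<times> {a..b}) (\<lambda>p. F (snd p))"
    by (rule continuous_on_compose2[OF assms continuous_on_snd[OF continuous_on_id]]) auto
qed

lemma sep_const:
  fixes f g :: "real \<Rightarrow> 'a::euclidean_space"
  assumes cf: "continuous_on {a0..b} f" and cg: "continuous_on {a0..c} g" and eta: "0 < \<eta>"
   and sep: "\<forall>s\<in>{a0..b}. \<forall>u\<in>{a0..c}. f s = g u \<longrightarrow> s = a0 \<and> u = a0"
  shows "\<exists>d>0. \<forall>s\<in>{a0..b}. \<forall>u\<in>{a0..c}. (a0+\<eta> \<le> s \<or> a0+\<eta> \<le> u) \<longrightarrow> d \<le> norm (f s - g u)"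
proof -
  define S where "S = {a0+\<eta>..b}\<times>{a0..c} \<union> {a0..b}\<times>{a0+\<eta>..c}"
  define \<phi> where "\<phi> p = norm (f (fst p) - g (snd p))" for p :: "real \<times> real"
  have inS: "(s,u) \<in> S" if "s\<in>{a0..b}" "u\<in>{a0..c}" "a0+\<eta> \<le> s \<or> a0+\<eta> \<le> u" for s u
    using that by (auto simp: S_def)
  have Ssub: "S \<subseteq> {a0..b}\<times>{a0..c}" using eta by (auto simp: S_def)
  have cS: "compact S" unfolding S_def by (intro compact_Un compact_Times compact_Icc)
  have cphi: "continuous_on S \<phi>"
  proof -
    have "continuous_on ({a0..b}\<times>{a0..c}) \<phi>"
      unfolding \<phi>_def using cont_fst_snd(1)[OF cf, of "{a0..c}"] cont_fst_snd(2)[OF cg, of "{a0..b}"]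
      by (intro continuous_intros) auto
    then show ?thesis using Ssub continuous_on_subset by blast
  qed
  show ?thesis
  proof (cases "S = {}")
    case True
    have "\<forall>s\<in>{a0..b}. \<forall>u\<in>{a0..c}. (a0+\<eta> \<le> s \<or> a0+\<eta> \<le> u) \<longrightarrow> 1 \<le> norm (f s - g u)"
    proof (intro ballI impI)
      fix s u assume "s\<in>{a0..b}" "u\<in>{a0..c}" "a0+\<eta> \<le> s \<or> a0+\<eta> \<le> u"
      then have "(s,u) \<in> S" by (rule inS)
      then show "1 \<le> norm (f s - g u)" using True by simp
    qed
    then show ?thesis by (intro exI[of _ 1]) simp
  next
    case False
    have "compact (\<phi> ` S)" using cS cphi compact_continuous_image by blast
    moreover have "\<phi> ` S \<noteq> {}" using False by blast
    ultimately obtain m where m: "m \<in> \<phi> ` S" "\<And>y. y \<in> \<phi> ` S \<Longrightarrow> m \<le> y"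
      using compact_attains_inf by metis
    then obtain p where p: "p \<in> S" "m = \<phi> p" by blast
    have "m > 0"
    proof (rule ccontr)
      assume "\<not> m > 0"
      then have "f (fst p) = g (snd p)" using p unfolding \<phi>_def by simp
      moreover have "fst p \<in> {a0..b}" "snd p \<in> {a0..c}" using p Ssub by auto
      ultimately have "fst p = a0 \<and> snd p = a0" using sep by blast
      then show False using p eta unfolding S_def by auto
    qed
    have "\<forall>s\<in>{a0..b}. \<forall>u\<in>{a0..c}. (a0+\<eta> \<le> s \<or> a0+\<eta> \<le> u) \<longrightarrow> m \<le> norm (f s - g u)"
    proof (intro ballI impI)
      fix s u assume "s\<in>{a0..b}" "u\<in>{a0..c}" "a0+\<eta> \<le> s \<or> a0+\<eta> \<le> u"
      then have "(s,u) \<in> S" by (rule inS)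
      then have "\<phi> (s,u) \<in> \<phi> ` S" by (rule imageI)
      then show "m \<le> norm (f s - g u)" using m(2) unfolding \<phi>_def by simp
    qed
    then show ?thesis using \<open>m > 0\<close> by blast
  qed
qed



lemma exp_sq_le1: "exp (- (z::real)\<^sup>2 / w\<^sup>2) \<le> 1"
  by simp

lemma exp_sq_nn: "0 \<le> exp (- (z::real)\<^sup>2 / w\<^sup>2)"
  by simp

lemma kprod_le1: "exp (- (z::real)\<^sup>2 / w\<^sup>2) * exp (- (z'::real)\<^sup>2 / w'\<^sup>2) \<le> 1"
  using mult_le_one[OF exp_sq_le1[of z w] exp_sq_nn[of z' w'] exp_sq_le1[of z' w']] .

lemma kernel_far:
  fixes sx st k1 nf nt T :: real
  assumes "0 < sx" "0 < st" "0 < k1" "k1 * sx \<le> st" "0 \<le> T" "T \<le> k1*nf"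
  shows "exp (- nf\<^sup>2/sx\<^sup>2) * exp (- nt\<^sup>2/st\<^sup>2) \<le> exp (- T\<^sup>2/st\<^sup>2)"
proof -
  have nf: "0 \<le> nf" using assms by (meson order_trans zero_le_mult_iff not_le less_le)
  have "T\<^sup>2 \<le> (k1*nf)\<^sup>2" using assms by (intro power_mono) auto
  moreover have "(k1 * sx)\<^sup>2 \<le> st\<^sup>2" using assms by (intro power_mono) auto
  ultimately have "T\<^sup>2 * sx\<^sup>2 \<le> nf\<^sup>2 * st\<^sup>2"
  proof -
    assume h1: "T\<^sup>2 \<le> (k1*nf)\<^sup>2" and h2: "(k1 * sx)\<^sup>2 \<le> st\<^sup>2"
    have "T\<^sup>2 * sx\<^sup>2 \<le> (k1*nf)\<^sup>2 * sx\<^sup>2" using h1 by (intro mult_right_mono) auto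
    also have "\<dots> = nf\<^sup>2 * (k1 * sx)\<^sup>2" by (simp add: power_mult_distrib)
    also have "\<dots> \<le> nf\<^sup>2 * st\<^sup>2" using h2 by (intro mult_left_mono) auto
    finally show ?thesis .
  qed
  then have "T\<^sup>2/st\<^sup>2 \<le> nf\<^sup>2/sx\<^sup>2" using assms by (simp add: field_simps)
  then have "exp (- nf\<^sup>2/sx\<^sup>2) \<le> exp (- T\<^sup>2/st\<^sup>2)" by simp
  moreover have "exp (- nt\<^sup>2/st\<^sup>2) \<le> 1" by simp
  ultimately show ?thesis
    by (metis mult_le_one mult.right_neutral mult_left_mono exp_ge_zero order_trans)
qed

lemma kernel_near:
  fixes sx st nf nt T :: real
  assumes "0 < st" "0 \<le> T" "T \<le> nt"
  shows "exp (- nf\<^sup>2/sx\<^sup>2) * exp (- nt\<^sup>2/st\<^sup>2) \<le> exp (- T\<^sup>2/st\<^sup>2)"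
proof -
  have "T\<^sup>2 \<le> nt\<^sup>2" using assms by (intro power_mono) auto
  then have "T\<^sup>2/st\<^sup>2 \<le> nt\<^sup>2/st\<^sup>2" using assms by (intro divide_right_mono) auto
  then have "exp (- nt\<^sup>2/st\<^sup>2) \<le> exp (- T\<^sup>2/st\<^sup>2)" by simp
  moreover have "exp (- nf\<^sup>2/sx\<^sup>2) \<le> 1" by simp
  ultimately show ?thesis
    by (metis mult_le_one mult.left_neutral mult_right_mono exp_ge_zero order_trans)
qed

lemma kernel_lower:
  fixes sx st k1 nf nt M :: real
  assumes "0 < sx" "0 < st" "0 < k1" "k1 * sx \<le> st" "0 \<le> nf" "nf \<le> sx" "0 \<le> nt" "nt \<le> M * sx" "0 \<le> M"
  shows "exp (- (1 + M\<^sup>2/k1\<^sup>2)) \<le> exp (- nf\<^sup>2/sx\<^sup>2) * exp (- nt\<^sup>2/st\<^sup>2)"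
proof -
  have "nf\<^sup>2 \<le> sx\<^sup>2" using assms by (intro power_mono) auto
  then have a: "nf\<^sup>2/sx\<^sup>2 \<le> 1" using assms by simp
  have "nt\<^sup>2 \<le> (M * sx)\<^sup>2" using assms by (intro power_mono) auto
  moreover have "(k1 * sx)\<^sup>2 \<le> st\<^sup>2" using assms by (intro power_mono) auto
  ultimately have "nt\<^sup>2 * k1\<^sup>2 \<le> M\<^sup>2 * st\<^sup>2"
  proof -
    assume h1: "nt\<^sup>2 \<le> (M * sx)\<^sup>2" and h2: "(k1 * sx)\<^sup>2 \<le> st\<^sup>2"
    have "nt\<^sup>2 * k1\<^sup>2 \<le> (M * sx)\<^sup>2 * k1\<^sup>2" using h1 by (intro mult_right_mono) auto
    also have "\<dots> = M\<^sup>2 * (k1 * sx)\<^sup>2" by (simp add: power_mult_distrib)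
    also have "\<dots> \<le> M\<^sup>2 * st\<^sup>2" using h2 by (intro mult_left_mono) auto
    finally show ?thesis .
  qed
  then have b: "nt\<^sup>2/st\<^sup>2 \<le> M\<^sup>2/k1\<^sup>2" using assms by (simp add: field_simps)
  have "exp (- (1 + M\<^sup>2/k1\<^sup>2)) = exp (- 1) * exp (- (M\<^sup>2/k1\<^sup>2))" by (simp add: exp_add[symmetric])
  also have "\<dots> \<le> exp (- nf\<^sup>2/sx\<^sup>2) * exp (- nt\<^sup>2/st\<^sup>2)"
    using a b by (intro mult_mono) auto
  finally show ?thesis .
qed



lemma core_bounds:
  fixes f g tf tg :: "real \<Rightarrow> 'a::euclidean_space" and a0 b c M e a :: real
  assumes ab: "a0 < b" and ac: "a0 < c" and M: "0 \<le> M"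
    and Lf: "\<forall>s\<in>{a0..b}. \<forall>u\<in>{a0..b}. norm (f s - f u) \<le> 1 * \<bar>s - u\<bar>"
    and Lg: "\<forall>s\<in>{a0..c}. \<forall>u\<in>{a0..c}. norm (g s - g u) \<le> 1 * \<bar>s - u\<bar>"
    and Ltf: "\<forall>s\<in>{a0..b}. \<forall>u\<in>{a0..b}. norm (tf s - tf u) \<le> M * \<bar>s - u\<bar>"
    and sep: "\<forall>s\<in>{a0..b}. \<forall>u\<in>{a0..c}. f s = g u \<longrightarrow> s = a0 \<and> u = a0"
    and A2: "\<forall>s\<in>{a0..b}. \<forall>s'\<in>{a0..b}. \<forall>u\<in>{a0..c}. \<forall>u'\<in>{a0..c}.
              (s - a0) + (u - a0) \<le> (s' - a0) + (u' - a0) \<longrightarrow>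
              norm (tf s - tg u) \<le> norm (tf s' - tg u')"
    and e: "0 < e" and a: "0 < a"
    and A3: "\<forall>s\<in>{a0..b}. s - a0 < e \<longrightarrow> (s - a0) powr a \<le> norm (tf s - tf a0)"
  shows "\<exists>\<eta>>0. \<exists>d>0. \<exists>c0>0. \<eta> < b - a0 \<and>
     (\<forall>sx st k1 \<tau>. 0 < sx \<and> 0 < st \<and> 0 < k1 \<and> k1 * sx \<le> st \<and> 0 < \<tau> \<and> \<tau> \<le> \<eta> \<and> \<tau> \<le> c - a0 \<and>
        \<tau> powr a \<le> k1 * d \<and> \<tau> powr a \<le> c0 \<longrightarrow>
        varifold_ip sx st f tf a0 b g tg a0 c \<le> \<tau>*\<tau> + exp (- (\<tau> powr a)\<^sup>2 / st\<^sup>2) * (c - a0) * (b - a0))"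
proof -
  have cf: "continuous_on {a0..b} f" by (rule lip_cont[where B=1]) (use Lf in auto)
  have cg: "continuous_on {a0..c} g" by (rule lip_cont[where B=1]) (use Lg in auto)
  define \<eta>0 where "\<eta>0 = min e (b - a0)"
  define \<eta> where "\<eta> = \<eta>0 / 3"
  have eta: "0 < \<eta>" "\<eta> < b - a0" "2 * \<eta> < e" "2 * \<eta> < b - a0"
    using e ab by (auto simp: \<eta>_def \<eta>0_def min_def)
  obtain d where d: "d > 0" and dsep: "\<forall>s\<in>{a0..b}. \<forall>u\<in>{a0..c}. (a0+\<eta> \<le> s \<or> a0+\<eta> \<le> u) \<longrightarrow> d \<le> norm (f s - g u)"
    using sep_const[OF cf cg eta(1) sep] by blast
  define c0 where "c0 = norm (tf a0 - tg a0)"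
  define c0' where "c0' = (if c0 = 0 then 1 else c0)"
  have c0': "c0' > 0" unfolding c0'_def c0_def by auto
  have kb: "exp (- (norm (f s - g u))\<^sup>2 / sx\<^sup>2) * exp (- (norm (tf s - tg u))\<^sup>2 / st\<^sup>2) \<le> exp (- (\<tau> powr a)\<^sup>2 / st\<^sup>2)"
    if h: "0 < sx" "0 < st" "0 < k1" "k1 * sx \<le> st" "0 < \<tau>" "\<tau> \<le> \<eta>" "\<tau> powr a \<le> k1 * d" "\<tau> powr a \<le> c0'"
      and su: "s \<in> {a0..b}" "u \<in> {a0..c}" and nb: "\<not> (s \<le> a0+\<tau> \<and> u \<le> a0+\<tau>)" for sx st k1 \<tau> s u
  proof (cases "a0+\<eta> \<le> s \<or> a0+\<eta> \<le> u")
    case True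
    then have "d \<le> norm (f s - g u)" using dsep su by blast
    then have "\<tau> powr a \<le> k1 * norm (f s - g u)" using h d by (meson mult_left_mono less_imp_le order_trans)
    then show ?thesis by (intro kernel_far[OF h(1-4)]) auto
  next
    case False
    define w where "w = (s - a0) + (u - a0)"
    have w: "\<tau> \<le> w" "w < 2 * \<eta>" using False nb su by (auto simp: w_def)
    define s1 where "s1 = a0 + w"
    have s1: "s1 \<in> {a0..b}" "s1 - a0 < e" "s1 - a0 = w" using w eta h(5) by (auto simp: s1_def)
    have a0b: "a0 \<in> {a0..b}" and a0c: "a0 \<in> {a0..c}" using ab ac by auto
    have hA: "norm (tf s1 - tg a0) \<le> norm (tf s - tg u)"
      using A2 s1(1) su a0c unfolding s1_def w_def by auto
    have hc: "c0 \<le> norm (tf s - tg u)"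
      using A2 a0b su a0c unfolding c0_def by force
    have hT: "\<tau> powr a \<le> norm (tf s - tg u)"
    proof (cases "c0 = 0")
      case True
      then have "tg a0 = tf a0" unfolding c0_def by simp
      moreover have "w powr a \<le> norm (tf s1 - tf a0)" using A3 s1 by auto
      moreover have "\<tau> powr a \<le> w powr a" using w h(5) a by (intro powr_mono2) auto
      ultimately show ?thesis using hA by simp
    next
      case False
      then show ?thesis using hc h(8) unfolding c0'_def by simp
    qed
    show ?thesis by (rule kernel_near) (use h hT in auto)
  qed
  have main: "varifold_ip sx st f tf a0 b g tg a0 c \<le> \<tau>*\<tau> + exp (- (\<tau> powr a)\<^sup>2 / st\<^sup>2) * (c - a0) * (b - a0)"
    if h: "0 < sx \<and> 0 < st \<and> 0 < k1 \<and> k1 * sx \<le> st \<and> 0 < \<tau> \<and> \<tau> \<le> \<eta> \<and> \<tau> \<le> c - a0 \<and>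
        \<tau> powr a \<le> k1 * d \<and> \<tau> powr a \<le> c0'" for sx st k1 \<tau> :: real
    unfolding varifold_ip_def
  proof (rule box_integral[OF ab ac])
    show "0 < \<tau>" "\<tau> \<le> b - a0" "\<tau> \<le> c - a0" using h eta by auto
    show "0 \<le> exp (- (\<tau> powr a)\<^sup>2 / st\<^sup>2)" by simp
    show "exp (- (norm (f s - g u))\<^sup>2 / sx\<^sup>2) * exp (- (norm (tf s - tg u))\<^sup>2 / st\<^sup>2) \<le> 1" for s u
      by (rule kprod_le1)
    show "exp (- (norm (f s - g u))\<^sup>2 / sx\<^sup>2) * exp (- (norm (tf s - tg u))\<^sup>2 / st\<^sup>2) \<le> exp (- (\<tau> powr a)\<^sup>2 / st\<^sup>2)"
      if "s \<in> {a0..b}" "u \<in> {a0..c}" "\<not> (s \<le> a0+\<tau> \<and> u \<le> a0+\<tau>)" for s u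
      using kb[of sx st k1 \<tau> s u] h that by blast
  qed
  show ?thesis
    apply (rule exI[of _ \<eta>], rule conjI, rule eta(1))
    apply (rule exI[of _ d], rule conjI, rule d)
    apply (rule exI[of _ c0'], rule conjI, rule c0')
    apply (rule conjI, rule eta(2))
    using main by blast
qed



lemma vip_nonneg: "0 \<le> varifold_ip sx st f tf a b g tg c d"
  unfolding varifold_ip_def
  by (intro integral_nonneg_any) (simp add: integral_nonneg_any)

lemma self_bound:
  fixes f tf :: "real \<Rightarrow> 'a::euclidean_space" and a0 b M :: real
  assumes ab: "a0 < b" and M: "0 \<le> M"
    and Lf: "\<forall>s\<in>{a0..b}. \<forall>u\<in>{a0..b}. norm (f s - f u) \<le> 1 * \<bar>s - u\<bar>"
    and Ltf: "\<forall>s\<in>{a0..b}. \<forall>u\<in>{a0..b}. norm (tf s - tf u) \<le> M * \<bar>s - u\<bar>"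
    and h: "0 < sx" "0 < st" "0 < k1" "k1 * sx \<le> st" "sx \<le> b - a0"
  shows "exp (- (1 + M\<^sup>2/k1\<^sup>2)) * sx * (b - a0) \<le> varifold_ip sx st f tf a0 b f tf a0 b"
proof -
  have cf: "continuous_on {a0..b} f" by (rule lip_cont[where B=1]) (use Lf in auto)
  have ctf: "continuous_on {a0..b} tf" by (rule lip_cont[where B=M]) (use Ltf M in auto)
  have cont: "continuous_on ({a0..b} \<times> {a0..b}) (\<lambda>p. exp (- (norm (f (fst p) - f (snd p)))\<^sup>2 / sx\<^sup>2) *
      exp (- (norm (tf (fst p) - tf (snd p)))\<^sup>2 / st\<^sup>2))"
    using cont_fst_snd(1)[OF cf, of "{a0..b}"] cont_fst_snd(2)[OF cf, of "{a0..b}"]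
      cont_fst_snd(1)[OF ctf, of "{a0..b}"] cont_fst_snd(2)[OF ctf, of "{a0..b}"] h
    by (intro continuous_intros) auto
  show ?thesis
    unfolding varifold_ip_def
  proof (rule self_lower[OF ab h(1) h(5)])
    show "continuous_on ({a0..b} \<times> {a0..b}) (\<lambda>(s, u). exp (- (norm (f s - f u))\<^sup>2 / sx\<^sup>2) *
      exp (- (norm (tf s - tf u))\<^sup>2 / st\<^sup>2))"
      using cont by (simp add: case_prod_unfold)
    show "0 \<le> exp (- (norm (f s - f u))\<^sup>2 / sx\<^sup>2) * exp (- (norm (tf s - tf u))\<^sup>2 / st\<^sup>2)" for s u
      by simp
    show "exp (- (1 + M\<^sup>2/k1\<^sup>2)) \<le> exp (- (norm (f s - f u))\<^sup>2 / sx\<^sup>2) * exp (- (norm (tf s - tf u))\<^sup>2 / st\<^sup>2)"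
      if "s \<in> {a0..b}" "u \<in> {a0..b}" "\<bar>s - u\<bar> \<le> sx" for s u
    proof (rule kernel_lower[OF h(1-4)])
      show "norm (f s - f u) \<le> sx" using Lf that by force
      have "norm (tf s - tf u) \<le> M * \<bar>s - u\<bar>" using Ltf that by blast
      also have "\<dots> \<le> M * sx" using that M by (intro mult_left_mono) auto
      finally show "norm (tf s - tf u) \<le> M * sx" .
    qed (use M in auto)
  qed
qed



lemma lim1: "(p::real) > 1 \<Longrightarrow> ((\<lambda>x::real. x powr p / x) \<longlongrightarrow> 0) (at_right 0)"
  by real_asymp
lemma lim2: "(q::real) > 0 \<Longrightarrow> ((\<lambda>x::real. exp (- (x powr (-q))) / x) \<longlongrightarrow> 0) (at_right 0)"
  by real_asymp
lemma lim3: "(q::real) > 0 \<Longrightarrow> ((\<lambda>x::real. x powr q) \<longlongrightarrow> 0) (at_right 0)"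
  by real_asymp

lemma core_limit:
  fixes f g tf tg :: "real \<Rightarrow> 'a::euclidean_space" and a0 b c M e a :: real
  assumes ab: "a0 < b" and ac: "a0 < c" and M: "0 \<le> M"
    and Lf: "\<forall>s\<in>{a0..b}. \<forall>u\<in>{a0..b}. norm (f s - f u) \<le> 1 * \<bar>s - u\<bar>"
    and Lg: "\<forall>s\<in>{a0..c}. \<forall>u\<in>{a0..c}. norm (g s - g u) \<le> 1 * \<bar>s - u\<bar>"
    and Ltf: "\<forall>s\<in>{a0..b}. \<forall>u\<in>{a0..b}. norm (tf s - tf u) \<le> M * \<bar>s - u\<bar>"
    and sep: "\<forall>s\<in>{a0..b}. \<forall>u\<in>{a0..c}. f s = g u \<longrightarrow> s = a0 \<and> u = a0"
    and A2: "\<forall>s\<in>{a0..b}. \<forall>s'\<in>{a0..b}. \<forall>u\<in>{a0..c}. \<forall>u'\<in>{a0..c}.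
              (s - a0) + (u - a0) \<le> (s' - a0) + (u' - a0) \<longrightarrow>
              norm (tf s - tg u) \<le> norm (tf s' - tg u')"
    and e: "0 < e" and a: "0 < a" "a < 2"
    and A3: "\<forall>s\<in>{a0..b}. s - a0 < e \<longrightarrow> (s - a0) powr a \<le> norm (tf s - tf a0)"
  shows "\<forall>k1>0. \<forall>k2>0. \<forall>\<epsilon>>0. \<exists>\<delta>>0. \<forall>\<sigma>x \<sigma>t.
           0 < \<sigma>x \<and> \<sigma>x < \<delta> \<and> 0 < \<sigma>t \<and> \<sigma>t < \<delta> \<and> k1 * \<sigma>x \<le> \<sigma>t \<and> \<sigma>t \<le> k2 * \<sigma>x \<longrightarrow>
           \<bar>varifold_ip \<sigma>x \<sigma>t f tf a0 b g tg a0 c\<bar>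
           \<le> \<epsilon> * (varifold_ip \<sigma>x \<sigma>t f tf a0 b f tf a0 b + varifold_ip \<sigma>x \<sigma>t g tg a0 c g tg a0 c)"
proof (intro allI impI)
  fix k1 k2 \<epsilon> :: real
  assume k1: "0 < k1" and k2: "0 < k2" and eps: "0 < \<epsilon>"
  obtain \<eta> d c0 where eta: "\<eta> > 0" "\<eta> < b - a0" and d: "d > 0" and c0: "c0 > 0"
    and main: "\<And>sx st k1 \<tau>. 0 < sx \<and> 0 < st \<and> 0 < k1 \<and> k1 * sx \<le> st \<and> 0 < \<tau> \<and> \<tau> \<le> \<eta> \<and> \<tau> \<le> c - a0 \<and>
        \<tau> powr a \<le> k1 * d \<and> \<tau> powr a \<le> c0 \<Longrightarrow>
        varifold_ip sx st f tf a0 b g tg a0 c \<le> \<tau>*\<tau> + exp (- (\<tau> powr a)\<^sup>2 / st\<^sup>2) * (c - a0) * (b - a0)"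
    using core_bounds[OF ab ac M Lf Lg Ltf sep A2 e a(1) A3] by blast
  define \<beta> where "\<beta> = (a + 2) / (4 * a)"
  define q where "q = (2 - a) / 2"
  define \<kappa> where "\<kappa> = exp (- (1 + M\<^sup>2/k1\<^sup>2))"
  define A where "A = (c - a0) * (b - a0)"
  define \<epsilon>' where "\<epsilon>' = \<epsilon> * \<kappa> * (b - a0) / k2"
  have \<beta>: "\<beta> > 0" "2 * \<beta> > 1" "\<beta> * a > 0" "\<beta> * a = (a + 2) / 4"
    using a by (auto simp: \<beta>_def field_simps intro: add_pos_pos mult_pos_pos)
  have q: "q > 0" using a by (simp add: q_def)
  have A: "A > 0" using ab ac by (simp add: A_def)
  have \<epsilon>': "\<epsilon>' > 0" using eps k2 ab by (simp add: \<epsilon>'_def \<kappa>_def)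
  have ev1: "\<forall>\<^sub>F x in at_right 0. x powr \<beta> < \<eta>" using order_tendstoD(2)[OF lim3[OF \<beta>(1)] eta(1)] .
  have ev2: "\<forall>\<^sub>F x in at_right 0. x powr \<beta> < c - a0" using order_tendstoD(2)[OF lim3[OF \<beta>(1)]] ac by simp
  have ev3: "\<forall>\<^sub>F x in at_right 0. x powr (\<beta> * a) < k1 * d" using order_tendstoD(2)[OF lim3[OF \<beta>(3)]] k1 d by simp
  have ev4: "\<forall>\<^sub>F x in at_right 0. x powr (\<beta> * a) < c0" using order_tendstoD(2)[OF lim3[OF \<beta>(3)] c0] .
  have ev5: "\<forall>\<^sub>F x in at_right 0. x powr (2 * \<beta>) / x < \<epsilon>' / 2" using order_tendstoD(2)[OF lim1[OF \<beta>(2)] half_gt_zero[OF \<epsilon>']] .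
  have ev6: "\<forall>\<^sub>F x in at_right 0. exp (- (x powr (-q))) / x < \<epsilon>' / (2 * A)"
    using order_tendstoD(2)[OF lim2[OF q]] \<epsilon>' A by simp
  have "\<forall>\<^sub>F x in at_right 0. x powr \<beta> < \<eta> \<and> x powr \<beta> < c - a0 \<and> x powr (\<beta> * a) < k1 * d \<and>
      x powr (\<beta> * a) < c0 \<and> x powr (2 * \<beta>) / x < \<epsilon>' / 2 \<and> exp (- (x powr (-q))) / x < \<epsilon>' / (2 * A)"
    using ev1 ev2 ev3 ev4 ev5 ev6 by (intro eventually_conj)
  then obtain \<delta>1 where \<delta>1: "\<delta>1 > 0" and P: "\<And>x. x > 0 \<Longrightarrow> x < \<delta>1 \<Longrightarrow>
      x powr \<beta> < \<eta> \<and> x powr \<beta> < c - a0 \<and> x powr (\<beta> * a) < k1 * d \<and>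
      x powr (\<beta> * a) < c0 \<and> x powr (2 * \<beta>) / x < \<epsilon>' / 2 \<and> exp (- (x powr (-q))) / x < \<epsilon>' / (2 * A)"
    unfolding eventually_at_right_field by auto
  show "\<exists>\<delta>>0. \<forall>\<sigma>x \<sigma>t.
           0 < \<sigma>x \<and> \<sigma>x < \<delta> \<and> 0 < \<sigma>t \<and> \<sigma>t < \<delta> \<and> k1 * \<sigma>x \<le> \<sigma>t \<and> \<sigma>t \<le> k2 * \<sigma>x \<longrightarrow>
           \<bar>varifold_ip \<sigma>x \<sigma>t f tf a0 b g tg a0 c\<bar>
           \<le> \<epsilon> * (varifold_ip \<sigma>x \<sigma>t f tf a0 b f tf a0 b + varifold_ip \<sigma>x \<sigma>t g tg a0 c g tg a0 c)"
  proof (intro exI[of _ "min \<delta>1 (b - a0)"] conjI allI impI)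
    show "0 < min \<delta>1 (b - a0)" using \<delta>1 ab by simp
    fix sx st :: real
    assume H: "0 < sx \<and> sx < min \<delta>1 (b - a0) \<and> 0 < st \<and> st < min \<delta>1 (b - a0) \<and> k1 * sx \<le> st \<and> st \<le> k2 * sx"
    then have sx: "0 < sx" "sx \<le> b - a0" and st: "0 < st" "st < \<delta>1" and kk: "k1 * sx \<le> st" "st \<le> k2 * sx"
      by auto
    note Pst = P[OF st]
    define \<tau> where "\<tau> = st powr \<beta>"
    have \<tau>: "\<tau> > 0" using st by (simp add: \<tau>_def)
    have \<tau>a: "\<tau> powr a = st powr (\<beta> * a)" using st by (simp add: \<tau>_def powr_powr)
    have \<tau>\<tau>: "\<tau> * \<tau> = st powr (2 * \<beta>)"
    proof -
      have "st powr (2 * \<beta>) = st powr (\<beta> + \<beta>)" by (simp only: mult_2)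
      also have "\<dots> = \<tau> * \<tau>" unfolding \<tau>_def by (rule powr_add)
      finally show ?thesis by simp
    qed
    have \<tau>e: "(\<tau> powr a)\<^sup>2 / st\<^sup>2 = st powr (-q)"
    proof -
      have "(\<tau> powr a)\<^sup>2 = st powr (\<beta> * a) * st powr (\<beta> * a)" by (simp only: \<tau>a power2_eq_square)
      also have "\<dots> = st powr (\<beta> * a + \<beta> * a)" by (rule powr_add[symmetric])
      finally have "(\<tau> powr a)\<^sup>2 = st powr (\<beta> * a + \<beta> * a)" .
      moreover have "st\<^sup>2 = st powr 2" using st by (simp add: powr_numeral)
      moreover have "-q = (\<beta> * a + \<beta> * a) - 2" using \<beta>(4) by (simp add: q_def field_simps)
      ultimately show ?thesis by (simp only: powr_diff)
    qed
    have cross: "varifold_ip sx st f tf a0 b g tg a0 c \<le> st powr (2 * \<beta>) + exp (- (st powr (-q))) * A"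
    proof -
      have "\<tau> \<le> \<eta>" "\<tau> \<le> c - a0" using Pst unfolding \<tau>_def by auto
      moreover have "\<tau> powr a \<le> k1 * d" "\<tau> powr a \<le> c0" using Pst unfolding \<tau>a by auto
      ultimately have "0 < sx \<and> 0 < st \<and> 0 < k1 \<and> k1 * sx \<le> st \<and> 0 < \<tau> \<and> \<tau> \<le> \<eta> \<and> \<tau> \<le> c - a0 \<and>
        \<tau> powr a \<le> k1 * d \<and> \<tau> powr a \<le> c0" using sx st k1 kk \<tau> by blast
      then have "varifold_ip sx st f tf a0 b g tg a0 c \<le> \<tau>*\<tau> + exp (- (\<tau> powr a)\<^sup>2 / st\<^sup>2) * (c - a0) * (b - a0)"
        by (rule main)
      moreover have "- (\<tau> powr a)\<^sup>2 / st\<^sup>2 = - (st powr (-q))" using \<tau>e by (simp add: minus_divide_left)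
      ultimately show ?thesis by (simp only: \<tau>\<tau> A_def mult.assoc)
    qed
    have t1: "st powr (2 * \<beta>) \<le> \<epsilon>' / 2 * st" using Pst st by (simp add: pos_divide_less_eq less_imp_le)
    have t2: "exp (- (st powr (-q))) * A \<le> \<epsilon>' / 2 * st"
    proof -
      have lt: "exp (- (st powr (-q))) < \<epsilon>' / (2 * A) * st" using Pst st by (simp add: pos_divide_less_eq)
      have "exp (- (st powr (-q))) * A \<le> \<epsilon>' / (2 * A) * st * A"
        using mult_right_mono[OF less_imp_le[OF lt] less_imp_le[OF A]] .
      also have "\<dots> = \<epsilon>' / 2 * st" using A by (simp add: field_simps)
      finally show ?thesis .
    qed
    have "\<epsilon>' * st \<le> \<epsilon> * (\<kappa> * sx * (b - a0))"
    proof -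
      have "\<epsilon>' * st = \<epsilon> * \<kappa> * (b - a0) * (st / k2)" by (simp add: \<epsilon>'_def)
      also have "\<dots> \<le> \<epsilon> * \<kappa> * (b - a0) * sx"
        using kk k2 eps ab by (intro mult_left_mono) (auto simp: \<kappa>_def pos_divide_le_eq mult.commute)
      finally show ?thesis by (simp add: mult_ac)
    qed
    also have "\<dots> \<le> \<epsilon> * varifold_ip sx st f tf a0 b f tf a0 b"
      using self_bound[OF ab M Lf Ltf sx(1) st(1) k1 kk(1) sx(2)] eps unfolding \<kappa>_def
      by (intro mult_left_mono) auto
    also have "\<dots> \<le> \<epsilon> * (varifold_ip sx st f tf a0 b f tf a0 b + varifold_ip sx st g tg a0 c g tg a0 c)"
      using vip_nonneg[of sx st g tg a0 c g tg a0 c] eps by (intro mult_left_mono) auto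
    finally have "\<epsilon>' * st \<le> \<epsilon> * (varifold_ip sx st f tf a0 b f tf a0 b + varifold_ip sx st g tg a0 c g tg a0 c)" .
    moreover have "\<bar>varifold_ip sx st f tf a0 b g tg a0 c\<bar> = varifold_ip sx st f tf a0 b g tg a0 c"
      by (rule abs_of_nonneg[OF vip_nonneg])
    ultimately show "\<bar>varifold_ip sx st f tf a0 b g tg a0 c\<bar>
           \<le> \<epsilon> * (varifold_ip sx st f tf a0 b f tf a0 b + varifold_ip sx st g tg a0 c g tg a0 c)"
      using cross t1 t2 by linarith
  qed
qed



lemma L_nonneg:
  assumes tree: "rooted_tree V r par" and emb: "tree_embedding V r par xp P L" and v: "v \<in> V"
  shows "0 \<le> L v"
proof -
  obtain m where m: "(par ^^ m) v = r" using tree v unfolding rooted_tree_def by blast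
  have "\<And>v. v \<in> V \<Longrightarrow> (par ^^ m) v = r \<Longrightarrow> 0 \<le> L v"
  proof (induction m)
    case 0
    then show ?case using emb unfolding tree_embedding_def by simp
  next
    case (Suc m)
    show ?case
    proof (cases "v = r")
      case True
      then show ?thesis using emb unfolding tree_embedding_def by simp
    next
      case False
      then have pv: "par v \<in> V" using tree Suc.prems unfolding rooted_tree_def by blast
      have "(par ^^ m) (par v) = (par ^^ Suc m) v" by (simp only: funpow_Suc_right comp_def)
      then have "(par ^^ m) (par v) = r" using Suc.prems by simp
      then have "0 \<le> L (par v)" using Suc.IH pv by blast
      moreover have "L (par v) < L v" using emb False Suc.prems unfolding tree_embedding_def by blast
      ultimately show ?thesis by simp
    qed
  qed
  then show ?thesis using v m by blast
qed

theorem lemma2: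
  fixes V :: "'v set" and r :: 'v and par :: "'v \<Rightarrow> 'v"
    and xp :: "'v \<Rightarrow> 'a::euclidean_space" and P :: "'v \<Rightarrow> real \<Rightarrow> 'a" and L :: "'v \<Rightarrow> real"
    and i j k :: 'v
  assumes tree: "rooted_tree V r par"
    and emb: "tree_embedding V r par xp P L"
    and ij: "j \<in> V - {r}" "par j = i"
    and ik: "k \<in> V - {r}" "par k = i"
    and jk: "j \<noteq> k"
    and A2: "\<forall>s\<in>{L i..L j}. \<forall>s'\<in>{L i..L j}. \<forall>u\<in>{L i..L k}. \<forall>u'\<in>{L i..L k}.
              (s - L i) + (u - L i) \<le> (s' - L i) + (u' - L i) \<longrightarrow>
              norm (tangent (P j) (L j) s - tangent (P k) (L k) u)
                \<le> norm (tangent (P j) (L j) s' - tangent (P k) (L k) u')"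
    and A3: "\<exists>U a. open U \<and> xp i \<in> U \<and> 0 < a \<and> a < 2 \<and>
              (\<forall>s\<in>{L i..L j}. P j s \<in> U \<longrightarrow>
                 norm (tangent (P j) (L j) s - tangent (P j) (L j) (L i)) \<ge> (s - L i) powr a) \<and>
              (\<forall>u\<in>{L i..L k}. P k u \<in> U \<longrightarrow>
                 norm (tangent (P k) (L k) u - tangent (P k) (L k) (L i)) \<ge> (u - L i) powr a)"
  shows "\<forall>k1>0. \<forall>k2>0. \<forall>\<epsilon>>0. \<exists>\<delta>>0. \<forall>\<sigma>x \<sigma>t.
           0 < \<sigma>x \<and> \<sigma>x < \<delta> \<and> 0 < \<sigma>t \<and> \<sigma>t < \<delta> \<and> k1 * \<sigma>x \<le> \<sigma>t \<and> \<sigma>t \<le> k2 * \<sigma>x \<longrightarrow>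
           \<bar>varifold_ip \<sigma>x \<sigma>t (P j) (tangent (P j) (L j)) (L i) (L j)
                               (P k) (tangent (P k) (L k)) (L i) (L k)\<bar>
           \<le> \<epsilon> * (varifold_ip \<sigma>x \<sigma>t (P j) (tangent (P j) (L j)) (L i) (L j)
                                  (P j) (tangent (P j) (L j)) (L i) (L j)
                   + varifold_ip \<sigma>x \<sigma>t (P k) (tangent (P k) (L k)) (L i) (L k)
                                  (P k) (tangent (P k) (L k)) (L i) (L k))"
proof -
  have iV: "i \<in> V" using tree ij unfolding rooted_tree_def by blast
  have jV: "j \<in> V" and kV: "k \<in> V" using ij ik by auto
  have Li: "0 \<le> L i" by (rule L_nonneg[OF tree emb iV])
  have ab: "L i < L j" using emb ij unfolding tree_embedding_def by blast
  have ac: "L i < L k" using emb ik unfolding tree_embedding_def by blast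
  have smj: "smooth_unit_speed_on (L j) (P j)" and smk: "smooth_unit_speed_on (L k) (P k)"
    using emb jV kV unfolding tree_embedding_def by auto
  obtain Mj where Mj: "Mj \<ge> 0"
    and Lf0: "\<forall>s\<in>{0..L j}. \<forall>u\<in>{0..L j}. norm (P j s - P j u) \<le> 1 * \<bar>s - u\<bar>"
    and Ltf0: "\<forall>s\<in>{0..L j}. \<forall>u\<in>{0..L j}. norm (tangent (P j) (L j) s - tangent (P j) (L j) u) \<le> Mj * \<bar>s - u\<bar>"
    using curve_props[OF smj] ab Li by auto
  obtain Mk where Lg0: "\<forall>s\<in>{0..L k}. \<forall>u\<in>{0..L k}. norm (P k s - P k u) \<le> 1 * \<bar>s - u\<bar>"
    using curve_props[OF smk] ac Li by auto
  have subj: "{L i..L j} \<subseteq> {0..L j}" and subk: "{L i..L k} \<subseteq> {0..L k}" using Li by auto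
  have Lf: "\<forall>s\<in>{L i..L j}. \<forall>u\<in>{L i..L j}. norm (P j s - P j u) \<le> 1 * \<bar>s - u\<bar>"
    using Lf0 subj by blast
  have Lg: "\<forall>s\<in>{L i..L k}. \<forall>u\<in>{L i..L k}. norm (P k s - P k u) \<le> 1 * \<bar>s - u\<bar>"
    using Lg0 subk by blast
  have Ltf: "\<forall>s\<in>{L i..L j}. \<forall>u\<in>{L i..L j}. norm (tangent (P j) (L j) s - tangent (P j) (L j) u) \<le> Mj * \<bar>s - u\<bar>"
    using Ltf0 subj by blast
  have Pi: "P v (L i) = xp i" if "v \<in> V - {r}" "par v = i" for v
  proof -
    have "P v (L i) = P i (L i)" using emb that Li unfolding tree_embedding_def by auto
    also have "\<dots> = xp i" using emb iV unfolding tree_embedding_def by auto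
    finally show ?thesis .
  qed
  have "inj_on (P j) {L (par j)..L j}" using emb ij(1) unfolding tree_embedding_def by blast
  then have injj: "inj_on (P j) {L i..L j}" using ij(2) by simp
  have "inj_on (P k) {L (par k)..L k}" using emb ik(1) unfolding tree_embedding_def by blast
  then have injk: "inj_on (P k) {L i..L k}" using ik(2) by simp
  have sep: "\<forall>s\<in>{L i..L j}. \<forall>u\<in>{L i..L k}. P j s = P k u \<longrightarrow> s = L i \<and> u = L i"
  proof (intro ballI impI)
    fix s u assume s: "s \<in> {L i..L j}" and u: "u \<in> {L i..L k}" and eq: "P j s = P k u"
    have "P j s \<in> edge_img P L par j" using s ij unfolding edge_img_def by auto
    moreover have "P j s \<in> edge_img P L par k" using u ik eq unfolding edge_img_def by auto
    ultimately have "P j s \<in> xp ` ({par j, j} \<inter> {par k, k})"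
      using emb ij ik jk unfolding tree_embedding_def by blast
    moreover have "{par j, j} \<inter> {par k, k} \<subseteq> {i}" using ij ik jk by auto
    ultimately have "P j s = xp i" by blast
    then have e1: "P j s = P j (L i)" and e2: "P k u = P k (L i)" using Pi[OF ij] Pi[OF ik] eq by auto
    have "s = L i" using injj e1 s ab unfolding inj_on_def by auto
    moreover have "u = L i" using injk e2 u ac unfolding inj_on_def by auto
    ultimately show "s = L i \<and> u = L i" by simp
  qed
  obtain U a where U: "open U" "xp i \<in> U" and a: "0 < a" "a < 2"
    and A3j: "\<forall>s\<in>{L i..L j}. P j s \<in> U \<longrightarrow>
                 norm (tangent (P j) (L j) s - tangent (P j) (L j) (L i)) \<ge> (s - L i) powr a"
    using A3 by blast
  obtain e where e: "e > 0" "ball (xp i) e \<subseteq> U" using U open_contains_ball by blast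
  have A3': "\<forall>s\<in>{L i..L j}. s - L i < e \<longrightarrow> (s - L i) powr a \<le> norm (tangent (P j) (L j) s - tangent (P j) (L j) (L i))"
  proof (intro ballI impI)
    fix s assume s: "s \<in> {L i..L j}" and se: "s - L i < e"
    have Lis: "L i \<in> {L i..L j}" using ab by simp
    have "norm (P j (L i) - P j s) \<le> 1 * \<bar>L i - s\<bar>" using Lf Lis s by blast
    then have "dist (xp i) (P j s) < e" using Pi[OF ij] s se by (simp add: dist_norm)
    then have "P j s \<in> U" using e by auto
    then show "(s - L i) powr a \<le> norm (tangent (P j) (L j) s - tangent (P j) (L j) (L i))"
      using A3j s by blast
  qed
  show ?thesis
    by (rule core_limit[OF ab ac Mj Lf Lg Ltf sep A2 e(1) a A3'])
qed

end
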